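(* For all $a,b>0$, $G(a,b)\le\lambda_s(a,b)\le L(a,b)$ whenever $-1/2\le s\le 0$. These bounds are best possible: the inequality $G(a,b)\le \lambda_s(a,b)$ holds for all $a,b>0$ if and only if $s\ge -1/2$, and the inequality $\lambda_s(a,b)\le L(a,b)$ holds for all $a,b>0$ if and only if $s\le 0$.
   Context: For $a,b>0$ with $a\neq b$ define $$\lambda_s(a,b)=\begin{cases}\dfrac{s-1}{s+1}\cdot\dfrac{a^{s+1}+b^{s+1}-2\left(\frac{a+b}{2}\right)^{s+1}}{a^s+b^s-2\left(\frac{a+b}{2}\right)^s}, & s\in\mathbb{R}\setminus\{-1,0,1\},\\[3mm] \dfrac{2\log\frac{a+b}{2}-\log a-\log b}{\frac{1}{2a}+\frac{1}{2b}-\frac{2}{a+b}}, & s=-1,\\[3mm] \dfrac{a\log a+b\log b-(a+b)\log\frac{a+b}{2}}{2\log\frac{a+b}{2}-\log a-\log b}, & s=0,\\[3mm] \dfrac{(b-a)^2}{4\left(a\log a+b\log b-(a+b)\log\frac{a+b}{2}\right)}, & s=1,\end{cases}$$ and $\lambda_s(a,a)=a$. The geometric mean is $G(a,b)=\sqrt{ab}$ and the logarithmic mean is $L(a,b)=\frac{b-a}{\log b-\log a}$ for $a\ne b$, $L(a,a)=a$. *)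

theory Defs
  imports Complex_Main
begin

definition lam :: "real \<Rightarrow> real \<Rightarrow> real \<Rightarrow> real" where
  "lam s a b =
    (if a = b then a
     else if s = -1 then
       (2 * ln ((a+b)/2) - ln a - ln b) / (1/(2*a) + 1/(2*b) - 2/(a+b))
     else if s = 0 then
       (a * ln a + b * ln b - (a+b) * ln ((a+b)/2)) / (2 * ln ((a+b)/2) - ln a - ln b)
     else if s = 1 then
       (b - a)^2 / (4 * (a * ln a + b * ln b - (a+b) * ln ((a+b)/2)))
     else
       (s - 1) / (s + 1) *
       ((a powr (s+1) + b powr (s+1) - 2 * ((a+b)/2) powr (s+1)) /
        (a powr s + b powr s - 2 * ((a+b)/2) powr s)))"

definition G :: "real \<Rightarrow> real \<Rightarrow> real" where
  "G a b = sqrt (a * b)"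

definition L :: "real \<Rightarrow> real \<Rightarrow> real" where
  "L a b = (if a = b then a else (b - a) / (ln b - ln a))"

end

theory Submission
  imports Defs "HOL-Real_Asymp.Real_Asymp"
begin


definition FF :: "real \<Rightarrow> real \<Rightarrow> real" where
  "FF q x = (if q = -1 then x * ln x - x else if q = -2 then - ln x
             else x powr (q+2) / ((q+1)*(q+2)))"

definition FF' :: "real \<Rightarrow> real \<Rightarrow> real" where
  "FF' q x = (if q = -1 then ln x else if q = -2 then - 1 / x
             else x powr (q+1) / (q+1))"

lemma FF_deriv: "x > 0 \<Longrightarrow> (FF q has_real_derivative FF' q x) (at x)"
proof -
  assume x: "x > 0"
  consider "q = -1" | "q = -2" | "q \<noteq> -1" "q \<noteq> -2" by blast
  then show ?thesis
  proof cases
    case 1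
    have "((\<lambda>x. x * ln x - x) has_real_derivative ln x) (at x)"
      using x by (auto intro!: derivative_eq_intros)
    then show ?thesis using 1 unfolding FF_def FF'_def by simp
  next
    case 2
    have "((\<lambda>x. - ln x) has_real_derivative -1/x) (at x)"
      using x by (auto intro!: derivative_eq_intros)
    then show ?thesis using 2 unfolding FF_def FF'_def by simp
  next
    case 3
    have a: "q + 1 \<noteq> 0" "q + 2 \<noteq> 0" using 3 by auto
    have "((\<lambda>x. x powr (q+2) / ((q+1)*(q+2))) has_real_derivative 
           (q+2) * x powr (q+2-1) / ((q+1)*(q+2))) (at x)"
      using x a by (auto intro!: derivative_eq_intros)
    moreover have "(q+2) * x powr (q+2-1) / ((q+1)*(q+2)) = x powr (q+1) / (q+1)"
    proof -
      have e: "q + 2 - 1 = q + 1" by simp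
      show ?thesis unfolding e using a by simp
    qed
    ultimately show ?thesis using 3 unfolding FF_def FF'_def by simp
  qed
qed

lemma FF'_deriv: "x > 0 \<Longrightarrow> (FF' q has_real_derivative x powr q) (at x)"
proof -
  assume x: "x > 0"
  consider "q = -1" | "q = -2" | "q \<noteq> -1" "q \<noteq> -2" by blast
  then show ?thesis
  proof cases
    case 1
    have "(ln has_real_derivative 1/x) (at x)"
      using x by (auto intro!: derivative_eq_intros)
    then show ?thesis using 1 x unfolding FF'_def by (simp add: powr_minus_divide)
  next
    case 2
    have "((\<lambda>x. - 1 / x) has_real_derivative 1/x^2) (at x)"
      using x by (auto intro!: derivative_eq_intros simp: power2_eq_square)
    moreover have "x powr (-2) = 1/x^2" using x by (simp add: powr_minus_divide)
    ultimately show ?thesis using 2 unfolding FF'_def by (simp add: powr_minus_divide)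
  next
    case 3
    have a: "q + 1 \<noteq> 0" using 3 by auto
    have "((\<lambda>x. x powr (q+1) / (q+1)) has_real_derivative 
           (q+1) * x powr (q+1-1) / (q+1)) (at x)"
      using x by (auto intro!: derivative_eq_intros)
    moreover have "(q+1) * x powr (q+1-1) / (q+1) = x powr q"
      using a by simp
    ultimately show ?thesis using 3 unfolding FF'_def by simp
  qed
qed

definition Dl :: "(real \<Rightarrow> real) \<Rightarrow> real \<Rightarrow> real \<Rightarrow> real" where
  "Dl f a b = f a + f b - 2 * f ((a+b)/2)"

lemma Dl_sym: "Dl f a b = Dl f b a"
  unfolding Dl_def by (simp add: add.commute)

lemma Dl_nonneg_aux:
  fixes f f' f'' :: "real \<Rightarrow> real"
  assumes ab: "0 < a" "a < b"
    and d1: "\<And>x. x > 0 \<Longrightarrow> (f has_real_derivative f' x) (at x)"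
    and d2: "\<And>x. x > 0 \<Longrightarrow> (f' has_real_derivative f'' x) (at x)"
    and nn: "\<And>x. x > 0 \<Longrightarrow> f'' x \<ge> 0"
  shows "Dl f a b \<ge> 0"
proof -
  define m where "m = (a+b)/2"
  have am: "a < m" "m < b" using ab unfolding m_def by auto
  obtain z1 where z1: "m < z1" "z1 < b" "f b - f m = (b - m) * f' z1"
    using MVT2[OF am(2), of f f'] d1 am ab by auto
  obtain z2 where z2: "a < z2" "z2 < m" "f m - f a = (m - a) * f' z2"
    using MVT2[OF am(1), of f f'] d1 am ab by auto
  have fz: "f' z2 \<le> f' z1"
  proof (rule DERIV_nonneg_imp_nondecreasing[of z2 z1 f'])
    show "z2 \<le> z1" using z1 z2 by simp
    fix x assume "z2 \<le> x" "x \<le> z1"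
    hence "x > 0" using z2 ab by simp
    thus "\<exists>y. DERIV f' x :> y \<and> y \<ge> 0" using d2 nn by blast
  qed
  have bm: "b - m = m - a" unfolding m_def by (simp add: field_simps)
  have "Dl f a b = (f b - f m) - (f m - f a)" unfolding Dl_def m_def by simp
  also have "\<dots> = (b-m) * f' z1 - (m-a) * f' z2" using z1(3) z2(3) by simp
  also have "\<dots> = (b-m) * (f' z1 - f' z2)" unfolding bm by (simp add: right_diff_distrib)
  finally have "Dl f a b = (b-m) * (f' z1 - f' z2)" .
  then show ?thesis using am fz by simp
qed

lemma Dl_pos_aux:
  fixes f f' f'' :: "real \<Rightarrow> real"
  assumes ab: "0 < a" "a < b"
    and d1: "\<And>x. x > 0 \<Longrightarrow> (f has_real_derivative f' x) (at x)"
    and d2: "\<And>x. x > 0 \<Longrightarrow> (f' has_real_derivative f'' x) (at x)"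
    and nn: "\<And>x. x > 0 \<Longrightarrow> f'' x > 0"
  shows "Dl f a b > 0"
proof -
  define m where "m = (a+b)/2"
  have am: "a < m" "m < b" using ab unfolding m_def by auto
  obtain z1 where z1: "m < z1" "z1 < b" "f b - f m = (b - m) * f' z1"
    using MVT2[OF am(2), of f f'] d1 am ab by auto
  obtain z2 where z2: "a < z2" "z2 < m" "f m - f a = (m - a) * f' z2"
    using MVT2[OF am(1), of f f'] d1 am ab by auto
  have fz: "f' z2 < f' z1"
  proof (rule DERIV_pos_imp_increasing[of z2 z1 f'])
    show "z2 < z1" using z1 z2 by simp
    fix x assume "z2 \<le> x" "x \<le> z1"
    hence "x > 0" using z2 ab by simp
    thus "\<exists>y. DERIV f' x :> y \<and> y > 0" using d2 nn by blast
  qed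
  have bm: "b - m = m - a" unfolding m_def by (simp add: field_simps)
  have "Dl f a b = (f b - f m) - (f m - f a)" unfolding Dl_def m_def by simp
  also have "\<dots> = (b-m) * f' z1 - (m-a) * f' z2" using z1(3) z2(3) by simp
  also have "\<dots> = (b-m) * (f' z1 - f' z2)" unfolding bm by (simp add: right_diff_distrib)
  finally have "Dl f a b = (b-m) * (f' z1 - f' z2)" .
  then show ?thesis using am fz by simp
qed

lemma Dl_nonneg:
  fixes f f' f'' :: "real \<Rightarrow> real"
  assumes ab: "0 < a" "0 < b"
    and d1: "\<And>x. x > 0 \<Longrightarrow> (f has_real_derivative f' x) (at x)"
    and d2: "\<And>x. x > 0 \<Longrightarrow> (f' has_real_derivative f'' x) (at x)"
    and nn: "\<And>x. x > 0 \<Longrightarrow> f'' x \<ge> 0"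
  shows "Dl f a b \<ge> 0"
proof -
  consider "a < b" | "a = b" | "b < a" by linarith
  then show ?thesis
  proof cases
    case 1 then show ?thesis using Dl_nonneg_aux[OF ab(1) 1 d1 d2 nn] by blast
  next
    case 2 then show ?thesis unfolding Dl_def by simp
  next
    case 3 then show ?thesis using Dl_nonneg_aux[OF ab(2) 3 d1 d2 nn] Dl_sym by metis
  qed
qed

lemma Dl_pos:
  fixes f f' f'' :: "real \<Rightarrow> real"
  assumes ab: "0 < a" "0 < b" "a \<noteq> b"
    and d1: "\<And>x. x > 0 \<Longrightarrow> (f has_real_derivative f' x) (at x)"
    and d2: "\<And>x. x > 0 \<Longrightarrow> (f' has_real_derivative f'' x) (at x)"
    and nn: "\<And>x. x > 0 \<Longrightarrow> f'' x > 0"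
  shows "Dl f a b > 0"
proof -
  consider "a < b" | "b < a" using ab by linarith
  then show ?thesis
  proof cases
    case 1 then show ?thesis using Dl_pos_aux[OF ab(1) 1 d1 d2 nn] by blast
  next
    case 2 then show ?thesis using Dl_pos_aux[OF ab(2) 2 d1 d2 nn] Dl_sym by metis
  qed
qed

definition II :: "real \<Rightarrow> real \<Rightarrow> real \<Rightarrow> real" where
  "II q a b = Dl (FF q) a b"

lemma II_pos: "0 < a \<Longrightarrow> 0 < b \<Longrightarrow> a \<noteq> b \<Longrightarrow> II q a b > 0"
  unfolding II_def by (rule Dl_pos[OF _ _ _ FF_deriv FF'_deriv]) auto

lemma FF_gen: "q \<noteq> -1 \<Longrightarrow> q \<noteq> -2 \<Longrightarrow> FF q x = x powr (q+2)/((q+1)*(q+2))"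
  unfolding FF_def by simp

lemma II_gen: assumes "s \<noteq> 0" "s \<noteq> -1"
  shows "II (s-1) a b = (a powr (s+1) + b powr (s+1) - 2 * ((a+b)/2) powr (s+1)) / (s*(s+1))"
proof -
  have e: "s - 1 + 2 = s + 1" "s - 1 + 1 = s" by simp_all
  have "FF (s-1) x = x powr (s+1) / (s*(s+1))" for x
    using assms by (subst FF_gen) (auto simp: e)
  then show ?thesis unfolding II_def Dl_def by (simp add: diff_divide_distrib add_divide_distrib)
qed

lemma II_gen2: assumes "s \<noteq> 0" "s \<noteq> 1"
  shows "II (s-2) a b = (a powr s + b powr s - 2 * ((a+b)/2) powr s) / ((s-1)*s)"
proof -
  have e: "s - 2 + 2 = s" "s - 2 + 1 = s - 1" by simp_all
  have "FF (s-2) x = x powr s / ((s-1)*s)" for x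
    using assms by (subst FF_gen) (auto simp: e)
  then show ?thesis unfolding II_def Dl_def by (simp add: diff_divide_distrib add_divide_distrib)
qed

lemma lam_II:
  assumes ab: "0 < a" "0 < b" "a \<noteq> b"
  shows "lam s a b = II (s-1) a b / II (s-2) a b"
proof -
  have p1: "II (s-1) a b > 0" and p2: "II (s-2) a b > 0" using II_pos ab by auto
  consider "s = -1" | "s = 0" | "s = 1" | "s \<noteq> -1" "s \<noteq> 0" "s \<noteq> 1" by blast
  then show ?thesis
  proof cases
    case 1
    have i1: "II (s-1) a b = 2 * ln ((a+b)/2) - ln a - ln b"
      using 1 unfolding II_def Dl_def FF_def by simp
    have f: "x > 0 \<Longrightarrow> FF (s-2) x = 1/(2*x)" for x using 1 unfolding FF_def by (simp add: powr_minus_divide)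
    have i2: "II (s-2) a b = 1/(2*a) + 1/(2*b) - 2/(a+b)"
      proof -
      have h4: "4/(2*a+2*b) = 2/(a+b)"
      proof - 
        have "a + b > 0" using ab by simp
        thus ?thesis by (simp add: field_simps)
      qed
      show ?thesis unfolding II_def Dl_def using ab by (simp add: f h4)
    qed
    show ?thesis using 1 ab unfolding lam_def i1 i2 by simp
  next
    case 2
    have i1: "II (s-1) a b = a * ln a + b * ln b - (a+b) * ln ((a+b)/2)"
      using 2 unfolding II_def Dl_def FF_def by (simp add: field_simps)
    have i2: "II (s-2) a b = 2 * ln ((a+b)/2) - ln a - ln b"
      using 2 unfolding II_def Dl_def FF_def by simp
    show ?thesis using 2 ab unfolding lam_def i1 i2 by simp
  next
    case 3
    have i1: "II (s-1) a b = (b-a)^2/4"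
      using 3 ab unfolding II_def Dl_def FF_def by (simp add: power2_eq_square field_simps)
    have i2: "II (s-2) a b = a * ln a + b * ln b - (a+b) * ln ((a+b)/2)"
      using 3 unfolding II_def Dl_def FF_def by (simp add: field_simps)
    show ?thesis using 3 ab unfolding lam_def i1 i2 by simp
  next
    case 4
    have n0: "a powr s + b powr s - 2 * ((a+b)/2) powr s \<noteq> 0"
      using p2 II_gen2[of s a b] 4 by auto
    have alg: "(N1/(s*(s+1)))/(N0/((s-1)*s)) = (s-1)/(s+1)*(N1/N0)" for N1 N0 :: real
    proof -
      have "(N1/(s*(s+1)))/(N0/((s-1)*s)) = (N1 * ((s-1)*s)) / (s*(s+1) * N0)" by simp
      also have "\<dots> = ((s-1) * N1) / ((s+1)*N0) * (s / s)" by (simp add: ac_simps)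
      also have "\<dots> = (s-1)/(s+1)*(N1/N0)" using 4 by simp
      finally show ?thesis .
    qed
    show ?thesis using 4 ab unfolding lam_def II_gen[OF 4(2,1)] II_gen2[OF 4(2,3)] alg
      by simp
  qed
qed

lemma II_mono:
  assumes ab: "0 < a" "0 < b" "a \<noteq> b" and qr: "q \<le> r"
  shows "II (q+1) a b * II r a b \<le> II (r+1) a b * II q a b"
proof -
  have p0: "II q a b > 0" and p1: "II (q+1) a b > 0" using II_pos ab by auto
  define c where "c = II (q+1) a b / II q a b"
  have c0: "c > 0" using p0 p1 unfolding c_def by simp
  have cq: "c * II q a b = II (q+1) a b" using p0 unfolding c_def by simp
  define e where "e = r - q"
  have e0: "e \<ge> 0" using qr unfolding e_def by simp
  define h where "h = (\<lambda>x. FF (r+1) x - c * FF r x - c powr e * FF (q+1) x + c powr (e+1) * FF q x)"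
  define h' where "h' = (\<lambda>x. FF' (r+1) x - c * FF' r x - c powr e * FF' (q+1) x + c powr (e+1) * FF' q x)"
  define h'' where "h'' = (\<lambda>x::real. x powr (r+1) - c * x powr r - c powr e * x powr (q+1) + c powr (e+1) * x powr q)"
  have d1: "(h has_real_derivative h' x) (at x)" if "x > 0" for x
    unfolding h_def h'_def
    by (rule DERIV_add[OF DERIV_diff[OF DERIV_diff[OF FF_deriv DERIV_cmult[OF FF_deriv]] DERIV_cmult[OF FF_deriv]] DERIV_cmult[OF FF_deriv]]) (use that in auto)
  have d2: "(h' has_real_derivative h'' x) (at x)" if "x > 0" for x
    unfolding h'_def h''_def
    by (rule DERIV_add[OF DERIV_diff[OF DERIV_diff[OF FF'_deriv DERIV_cmult[OF FF'_deriv]] DERIV_cmult[OF FF'_deriv]] DERIV_cmult[OF FF'_deriv]]) (use that in auto)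
  have nn: "h'' x \<ge> 0" if x: "x > 0" for x
  proof -
    have r1: "x powr (r+1) = x powr q * x * x powr e"
    proof -
      have "x powr (r+1) = x powr (q + e + 1)" unfolding e_def by simp
      also have "\<dots> = x powr q * x powr e * x" using x by (simp add: powr_add)
      finally show ?thesis by (simp add: ac_simps)
    qed
    have r2: "x powr r = x powr q * x powr e"
    proof -
      have "x powr r = x powr (q + e)" unfolding e_def by simp
      also have "\<dots> = x powr q * x powr e" using x by (simp add: powr_add)
      finally show ?thesis .
    qed
    have r3: "x powr (q+1) = x powr q * x" using x by (simp add: powr_add)
    have r4: "c powr (e+1) = c powr e * c" using c0 by (simp add: powr_add)
    have "h'' x = x powr q * ((x - c) * (x powr e - c powr e))"
      unfolding h''_def r1 r2 r3 r4 by (simp add: algebra_simps)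
    moreover have "(x - c) * (x powr e - c powr e) \<ge> 0"
    proof (cases "x \<le> c")
      case True
      then have "x powr e \<le> c powr e" using x e0 by (intro powr_mono2) auto
      then show ?thesis using True by (intro mult_nonpos_nonpos) auto
    next
      case False
      then have "c powr e \<le> x powr e" using c0 e0 by (intro powr_mono2) auto
      then show ?thesis using False by (intro mult_nonneg_nonneg) auto
    qed
    ultimately show ?thesis by simp
  qed
  have "Dl h a b \<ge> 0" by (rule Dl_nonneg[OF ab(1,2) d1 d2 nn])
  moreover have "Dl h a b = II (r+1) a b - c * II r a b - c powr e * II (q+1) a b + c powr (e+1) * II q a b"
    unfolding h_def Dl_def II_def by (simp add: algebra_simps)
  moreover have "c powr (e+1) * II q a b = c powr e * II (q+1) a b"
    using c0 cq by (simp add: powr_add mult.assoc)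
  ultimately have "c * II r a b \<le> II (r+1) a b" by simp
  then have "II (q+1) a b * II r a b / II q a b \<le> II (r+1) a b" unfolding c_def by simp
  then show ?thesis using p0 by (simp add: pos_divide_le_eq)
qed

lemma G_base:
  assumes ab: "0 < a" "0 < b" "a \<noteq> b"
  shows "G a b \<le> II (-3/2) a b / II (-5/2) a b"
proof -
  have f1: "FF (-(3/2)) x = -4 * sqrt x" if "x > 0" for x
  proof -
    have "FF (-(3/2)) x = x powr (1/2) / (-1/4)" unfolding FF_def by simp
    then show ?thesis using that by (simp add: powr_half_sqrt)
  qed
  have f2: "FF (-(5/2)) x = 4 / (3 * sqrt x)" if "x > 0" for x
  proof -
    have "FF (-(5/2)) x = x powr (-(1/2)) / (3/4)" unfolding FF_def by simp
    then show ?thesis using that by (simp add: powr_minus_divide powr_half_sqrt)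
  qed
  define u where "u = sqrt a"
  define v where "v = sqrt b"
  define w where "w = sqrt ((a+b)/2)"
  have u0: "u > 0" and v0: "v > 0" and w0: "w > 0" using ab unfolding u_def v_def w_def by auto
  have w2: "w^2 = (u^2 + v^2)/2" using ab unfolding u_def v_def w_def by simp
  have g: "G a b = u * v" unfolding G_def u_def v_def by (simp add: real_sqrt_mult)
  have N: "II (-3/2) a b = -4*u - 4*v + 8*w"
    unfolding II_def Dl_def u_def v_def w_def using ab by (simp add: f1)
  have D: "II (-5/2) a b = 4/(3*u) + 4/(3*v) - 8/(3*w)"
    unfolding II_def Dl_def u_def v_def w_def using ab by (simp add: f2)
  have Dp: "II (-5/2) a b > 0" using II_pos ab by blast
  have sq: "(4*(u+v)*w)^2 \<le> (3*(u^2+v^2) + 2*u*v)^2"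
  proof -
    have "(4*(u+v)*w)^2 = 16*(u+v)^2*w^2" by (simp add: power2_eq_square algebra_simps)
    also have "\<dots> = 8*(u+v)^2*(u^2+v^2)" unfolding w2 by simp
    also have "\<dots> = (3*(u^2+v^2) + 2*u*v)^2 - (u-v)^4"
      by (simp add: power2_eq_square power4_eq_xxxx algebra_simps)
    finally show ?thesis by simp
  qed
  have key: "4*(u+v)*w \<le> 3*(u^2+v^2) + 2*u*v"
    by (rule power2_le_imp_le[OF sq]) (use u0 v0 in simp)
  have e1: "u*v*(4/(3*u) + 4/(3*v) - 8/(3*w)) = 4/3*(u+v) - 8*u*v/(3*w)"
    using u0 v0 w0 by (simp add: field_simps)
  have e2: "16/3*(u+v) - 8*w \<le> 8*u*v/(3*w)"
  proof -
    have "(16/3*(u+v) - 8*w) * (3*w) = 16*(u+v)*w - 24*w^2" by (simp add: power2_eq_square algebra_simps)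
    also have "\<dots> = 16*(u+v)*w - 12*(u^2+v^2)" unfolding w2 by (simp add: field_simps)
    also have "\<dots> \<le> 8*u*v" using mult_left_mono[OF key, of 4] by (simp add: algebra_simps)
    finally show ?thesis using w0 by (simp add: pos_le_divide_eq)
  qed
  have "u*v*II (-5/2) a b \<le> II (-3/2) a b" unfolding D N e1
  proof -
    have gen: "\<And>X::real. 16/3*(u+v) - 8*w \<le> X \<Longrightarrow> 4/3*(u+v) - X \<le> -4*u - 4*v + 8*w"
      by (simp add: field_simps)
    show "4/3*(u+v) - 8*u*v/(3*w) \<le> -4*u - 4*v + 8*w" by (rule gen[OF e2])
  qed
  then show ?thesis unfolding g using Dp by (simp add: pos_le_divide_eq)
qed



lemma Kprime_nonneg:
  fixes p :: real assumes p: "p > 0"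
  shows "2/3/p^2 + p^4/3 - 1 \<ge> 0"
proof -
  have "2/3/p^2 + p^4/3 - 1 = (p^2 - 1)^2 * (p^2 + 2) / (3 * p^2)"
    using p by (simp add: field_simps power2_eq_square power4_eq_xxxx)
  also have "\<dots> \<ge> 0" using p by simp
  finally show ?thesis .
qed

lemma lazarevic:
  fixes y :: real assumes y: "y \<ge> 0"
  shows "y^3 * cosh y \<le> sinh y ^ 3"
proof -
  define K where "K = (\<lambda>y::real. sinh y * cosh y powr (-1/3) - y)"
  have dK: "\<exists>d. (K has_real_derivative d) (at x) \<and> d \<ge> 0" for x
  proof -
    define C where "C = cosh x"
    define S where "S = sinh x"
    define p where "p = C powr (-1/3)"
    have C0: "C > 0" unfolding C_def by simp
    have p0: "p > 0" unfolding p_def using C0 by simp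
    have p3: "p^3 * C = 1"
    proof -
      have "p^3 = p powr 3" using p0 by (simp add: powr_numeral)
      also have "\<dots> = C powr (-1/3 * 3)" unfolding p_def by (rule powr_powr)
      also have "\<dots> = 1 / C" using C0 by (simp add: powr_minus_divide)
      finally show ?thesis using C0 by simp
    qed
    have cs: "C^2 = S^2 + 1" unfolding C_def S_def by (rule cosh_square_eq)
    have dp: "((\<lambda>x. cosh x powr (-1/3)) has_real_derivative (-1/3) * C powr (-1/3 - of_nat 1) * S) (at x)"
      unfolding C_def S_def
      by (rule DERIV_fun_powr) (auto intro!: derivative_eq_intros)
    have Cp: "C powr (-1/3 - of_nat 1) = p / C"
    proof -
      have "C powr (-1/3 - of_nat 1) = C powr (-1/3) / C powr 1" using C0 by (simp only: of_nat_1 powr_diff)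
      then show ?thesis unfolding p_def using C0 by simp
    qed
    have dp': "((\<lambda>x. cosh x powr (-1/3)) has_real_derivative (-1/3) * (p / C) * S) (at x)"
      using dp unfolding Cp .
    have ds: "(sinh has_real_derivative C) (at x)" unfolding C_def
      by (auto intro!: derivative_eq_intros)
    have "((\<lambda>x. sinh x * cosh x powr (-1/3)) has_real_derivative C * (cosh x powr (-1/3)) + ((-1/3) * (p / C) * S) * sinh x) (at x)"
      by (rule DERIV_mult[OF ds dp'])
    then have "((\<lambda>x. sinh x * cosh x powr (-1/3) - x) has_real_derivative (C * p + S * ((-1/3) * (p / C) * S)) - 1) (at x)"
      unfolding p_def C_def S_def by (intro DERIV_diff) (auto simp: ac_simps)
    then have "(K has_real_derivative (C * p + S * ((-1/3) * (p / C) * S) - 1)) (at x)"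
      unfolding K_def .
    moreover have "C * p + S * ((-1/3) * (p / C) * S) - 1 = 2/3/p^2 + p^4/3 - 1"
    proof -
      have Cv: "C = 1 / p^3" using p3 p0 by (simp add: field_simps)
      have "C * p + S * ((-1/3) * (p / C) * S) - 1 = C * p - (C^2 - 1) * p / (3 * C) - 1"
        using cs C0 by (simp add: field_simps power2_eq_square)
      also have "\<dots> = 2/3/p^2 + p^4/3 - 1"
        unfolding Cv using p0 by (simp add: field_simps power2_eq_square power3_eq_cube power4_eq_xxxx)
      finally show ?thesis .
    qed
    ultimately show ?thesis using Kprime_nonneg[OF p0] by auto
  qed
  have "K 0 \<le> K y" by (rule DERIV_nonneg_imp_nondecreasing[OF y]) (use dK in blast)
  then have "y \<le> sinh y * cosh y powr (-1/3)" unfolding K_def by simp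
  define p where "p = cosh y powr (-1/3)"
  have p0: "p > 0" unfolding p_def by simp
  have p3: "p^3 * cosh y = 1"
  proof -
    have "p^3 = p powr 3" using p0 by (simp add: powr_numeral)
    also have "\<dots> = cosh y powr (-1/3 * 3)" unfolding p_def by (rule powr_powr)
    also have "\<dots> = 1 / cosh y" by (simp add: powr_minus_divide)
    finally show ?thesis by simp
  qed
  have "y^3 \<le> (sinh y * p)^3" using \<open>y \<le> _\<close> y unfolding p_def by (intro power_mono) auto
  then have "y^3 * cosh y \<le> (sinh y * p)^3 * cosh y" by (intro mult_right_mono) auto
  also have "\<dots> = sinh y ^ 3 * (p^3 * cosh y)" by (simp add: power_mult_distrib)
  finally show ?thesis unfolding p3 by simp
qed

lemma alg_f:
  fixes S C y D :: real
  assumes C: "C \<noteq> 0" and D: "D \<noteq> 0" "D = S + y*C" and cs: "C^2 = S^2 + 1"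
  shows "S/C - ((2*y*S + C*y^2)*D - y^2*S*(2*C + S*y))/(D*D) = (S^3 - y^3*C)/(C*D^2)"
proof -
  have num: "S*D^2 - C*((2*y*S + C*y^2)*D - y^2*S*(2*C + S*y)) = S^3 - y^3*C*(C^2 - S^2)"
    unfolding D(2) by algebra
  have "S/C - ((2*y*S + C*y^2)*D - y^2*S*(2*C + S*y))/(D*D)
      = (S*D^2 - C*((2*y*S + C*y^2)*D - y^2*S*(2*C + S*y)))/(C*D^2)"
    using C D(1) by (simp add: field_simps power2_eq_square)
  also have "\<dots> = (S^3 - y^3*C)/(C*D^2)" unfolding num using cs by simp
  finally show ?thesis .
qed

lemma fderiv:
  fixes y :: real assumes y: "y > 0"
  shows "((\<lambda>e. ln (cosh e) - e^2 * sinh e / (sinh e + e * cosh e)) has_real_derivative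
     (sinh y ^ 3 - y^3 * cosh y) / (cosh y * (sinh y + y * cosh y)^2)) (at y)"
proof -
  have S: "sinh y > 0" using y by simp
  have C: "cosh y > 0" by simp
  have den: "sinh y + y * cosh y > 0" using S C y by (simp add: add_pos_pos)
  have cs: "cosh y ^ 2 = sinh y ^ 2 + 1" by (rule cosh_square_eq)
  note A = alg_f[of "cosh y" "sinh y + y * cosh y" "sinh y" y, OF _ _ refl cs]
  show ?thesis
    apply (rule derivative_eq_intros refl | (use den in \<open>simp; fail\<close>))+
    apply (subst A[symmetric])
    using den C apply simp_all
    done
qed

lemma lim_f0: "((\<lambda>e::real. ln (cosh e) - e^2 * sinh e / (sinh e + e * cosh e)) \<longlongrightarrow> 0) (at_right 0)"
  by real_asymp

lemma hyp_key:
  fixes y :: real assumes y: "y > 0"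
  shows "y^2 * sinh y \<le> ln (cosh y) * (sinh y + y * cosh y)"
proof -
  define f where "f = (\<lambda>e::real. ln (cosh e) - e^2 * sinh e / (sinh e + e * cosh e))"
  have mono: "f e \<le> f y" if e: "0 < e" "e \<le> y" for e
  proof (rule DERIV_nonneg_imp_nondecreasing[OF e(2)])
    fix x assume x: "e \<le> x" "x \<le> y"
    then have x0: "x > 0" using e by simp
    have dpos: "sinh x + x * cosh x > 0" using x0 by (intro add_pos_pos) auto
    have "(sinh x ^ 3 - x^3 * cosh x) / (cosh x * (sinh x + x * cosh x)^2) \<ge> 0"
      using lazarevic[of x] x0 dpos by (intro divide_nonneg_pos) auto
    then show "\<exists>d. (f has_real_derivative d) (at x) \<and> d \<ge> 0"
      using fderiv[OF x0] unfolding f_def by blast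
  qed
  have ev: "eventually (\<lambda>e. f e \<le> f y) (at_right 0)"
    using eventually_at_right_real[OF y] by eventually_elim (auto intro: mono)
  have "0 \<le> f y"
    by (rule tendsto_upperbound[OF lim_f0[folded f_def] ev]) simp
  moreover have "sinh y + y * cosh y > 0" using y by (intro add_pos_pos) auto
  ultimately show ?thesis unfolding f_def by (simp add: field_simps)
qed


lemma L_base_aux:
  assumes ab: "0 < a" "a < b"
  shows "II (-1) a b / II (-2) a b \<le> L a b"
proof -
  have b0: "b > 0" using ab by simp
  define g where "g = sqrt (a*b)"
  define y where "y = (ln b - ln a)/2"
  define m where "m = (a+b)/2"
  define l where "l = ln m - ln g"
  have g0: "g > 0" unfolding g_def using ab by simp
  have y0: "y > 0" unfolding y_def using ab by simp
  have m0: "m > 0" unfolding m_def using ab by simp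
  have lg: "ln g = (ln a + ln b)/2" unfolding g_def using ab b0 by (simp add: ln_sqrt ln_mult)
  have eb: "exp y = b / g"
  proof -
    have "g * exp y = exp (ln g + y)" using g0 by (simp add: exp_add)
    also have "ln g + y = ln b" unfolding lg y_def by (simp add: field_simps)
    finally show ?thesis using g0 b0 by (simp add: field_simps)
  qed
  have ea: "exp (-y) = a / g"
  proof -
    have "g * exp (-y) = exp (ln g - y)" using g0 by (simp add: exp_diff exp_minus field_simps)
    also have "ln g - y = ln a" unfolding lg y_def by (simp add: field_simps)
    finally show ?thesis using g0 ab by (simp add: field_simps)
  qed
  have S: "sinh y = (b - a)/(2*g)" unfolding sinh_field_def eb ea using g0 by (simp add: field_simps)
  have C: "cosh y = (a + b)/(2*g)" unfolding cosh_field_def eb ea using g0 by (simp add: field_simps)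
  have Cm: "cosh y = m / g" unfolding C m_def using g0 by (simp add: field_simps)
  have lC: "ln (cosh y) = l" unfolding Cm l_def using m0 g0 by (simp add: ln_div)
  have key: "y^2 * ((b - a)/(2*g)) \<le> l * ((b - a)/(2*g) + y * ((a + b)/(2*g)))"
  proof -
    have "y^2 * sinh y \<le> l * (sinh y + y * cosh y)" using hyp_key[OF y0] unfolding lC .
    then show ?thesis unfolding S C .
  qed
  have key2: "y^2 * (b - a) \<le> l * ((b - a) + y * (a + b))"
  proof -
    have "y^2 * ((b - a)/(2*g)) = (y^2 * (b - a)) / (2*g)" by simp
    moreover have "l * ((b - a)/(2*g) + y * ((a + b)/(2*g))) = (l * ((b - a) + y * (a + b))) / (2*g)"
      using g0 by (simp add: field_simps)
    ultimately show ?thesis using key g0 by (simp add: divide_le_cancel)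
  qed
  have la: "ln a = ln g - y" unfolding lg y_def by (simp add: field_simps)
  have lb: "ln b = ln g + y" unfolding lg y_def by (simp add: field_simps)
  have lm: "ln m = ln g + l" unfolding l_def by simp
  have I1: "II (-1) a b = y * (b - a) - (a + b) * l"
  proof -
    have "II (-1) a b = a * ln a + b * ln b - 2 * (m * ln m)"
      unfolding II_def Dl_def FF_def m_def by (simp add: field_simps)
    also have "\<dots> = y * (b - a) - (a + b) * l" unfolding la lb lm by (simp add: m_def algebra_simps)
    finally show ?thesis .
  qed
  have I2: "II (-2) a b = 2 * l"
  proof -
    have "II (-2) a b = - ln a - ln b + 2 * ln m"
      unfolding II_def Dl_def FF_def m_def by simp
    also have "\<dots> = 2 * l" unfolding la lb lm by simp
    finally show ?thesis .
  qed
  have l0: "l > 0" using II_pos[of a b "-2"] ab unfolding I2 by simp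
  have y2: "2 * y = ln b - ln a" unfolding y_def by simp
  have Lab: "L a b = (b - a) / (2 * y)" unfolding L_def y2 using ab by simp
  have "(y * (b - a) - (a + b) * l) / (2 * l) \<le> (b - a) / (2 * y)"
  proof -
    have "(y * (b - a) - (a + b) * l) * (2 * y) \<le> (b - a) * (2 * l)"
      using key2 by (simp add: algebra_simps power2_eq_square)
    then show ?thesis using l0 y0 by (simp add: field_simps)
  qed
  then show ?thesis unfolding I1 I2 Lab .
qed


lemma witness_at_right:
  assumes "eventually P (at_right (0::real))"
  shows "\<exists>u. 0 < u \<and> u < 1 \<and> P u"
proof -
  have "eventually (\<lambda>u. u \<in> {0<..<1} \<and> P u) (at_right (0::real))"
    using eventually_conj[OF eventually_at_right_real[of 0 1] assms] by simp
  then show ?thesis using eventually_happens'[of "at_right (0::real)"] by force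
qed

lemma lam_u1: "0 < u \<Longrightarrow> u < 1 \<Longrightarrow> s \<noteq> -1 \<Longrightarrow> s \<noteq> 0 \<Longrightarrow> s \<noteq> 1 \<Longrightarrow>
  lam s u 1 = (s - 1) / (s + 1) * ((u powr (s+1) + 1 - 2 * ((u+1)/2) powr (s+1)) / (u powr s + 1 - 2 * ((u+1)/2) powr s))"
  unfolding lam_def by simp

lemma nec_G_m1: "\<exists>a b. 0 < a \<and> 0 < b \<and> lam (-1) a b < G a b"
proof -
  have ev: "eventually (\<lambda>u::real. (2 * ln ((u+1)/2) - ln u - ln 1) / (1/(2*u) + 1/(2*1) - 2/(u+1)) < sqrt (u*1)) (at_right 0)"
    by real_asymp
  obtain u where u: "0 < u" "u < 1" "(2 * ln ((u+1)/2) - ln u - ln 1) / (1/(2*u) + 1/(2*1) - 2/(u+1)) < sqrt (u*1)"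
    using witness_at_right[OF ev] by blast
  have "lam (-1) u 1 < G u 1" using u unfolding lam_def G_def by (simp add: add.commute)
  then show ?thesis using u by (intro exI[of _ u] exI[of _ 1]) auto
qed

lemma nec_G_gen:
  assumes s: "s < -1/2" "s \<noteq> -1"
  shows "\<exists>a b. 0 < a \<and> 0 < b \<and> lam s a b < G a b"
proof -
  define e where "e = -s - 1/2"
  have e0: "e > 0" using s unfolding e_def by simp
  define E where "E = (\<lambda>u::real. (s - 1) / (s + 1) * ((u powr (1/2) + u powr e * (1 - 2 * ((u+1)/2) powr (s+1))) /
                     (1 + u powr (-s) * (1 - 2 * ((u+1)/2) powr s))))"
  have z: "((\<lambda>u::real. u powr c) \<longlongrightarrow> 0) (at_right 0)" if "c > 0" for c
    by (rule tendsto_zero_powrI[OF tendsto_ident_at tendsto_const]) (auto simp: that eventually_at_right_less eventually_mono[OF eventually_at_right_less])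
  have "(E \<longlongrightarrow> (s - 1) / (s + 1) * ((0 + 0 * (1 - 2 * ((0+1)/2) powr (s+1))) / (1 + 0 * (1 - 2 * ((0+1)/2) powr s)))) (at_right 0)"
    unfolding E_def
    by (intro tendsto_intros z e0) (use s in auto)
  then have lim: "(E \<longlongrightarrow> 0) (at_right 0)" by simp
  have "eventually (\<lambda>u. E u < 1) (at_right 0)" using order_tendstoD(2)[OF lim] by simp
  then obtain u where u: "0 < u" "u < 1" "E u < 1" using witness_at_right by blast
  define t where "t = u powr (-s)"
  have t0: "t > 0" unfolding t_def using u by simp
  have sq: "sqrt u = u powr (1/2)" using u by (simp add: powr_half_sqrt)
  have f1: "sqrt u * u powr (1/2) = u" using u unfolding sq by (simp add: powr_add[symmetric])
  have f2: "sqrt u * u powr e = t" using u unfolding sq t_def e_def by (simp add: powr_add[symmetric])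
  have f3: "t * u powr (s+1) = u" using u unfolding t_def by (simp add: powr_add[symmetric])
  have f4: "t * u powr s = 1" using u unfolding t_def by (simp add: powr_add[symmetric])
  define X where "X = 1 - 2 * ((u+1)/2) powr (s+1)"
  define Y where "Y = 1 - 2 * ((u+1)/2) powr s"
  have "sqrt u * E u = (s - 1) / (s + 1) * ((sqrt u * u powr (1/2) + sqrt u * u powr e * X) / (1 + t * Y))"
    unfolding E_def X_def Y_def t_def by (simp add: algebra_simps)
  also have "\<dots> = (s - 1) / (s + 1) * ((u + t * X) / (1 + t * Y))"
    unfolding f1 f2 by simp
  also have "\<dots> = (s - 1) / (s + 1) * ((t * (u powr (s+1) + X)) / (t * (u powr s + Y)))"
    using f3 f4 by (simp add: algebra_simps)
  also have "\<dots> = (s - 1) / (s + 1) * ((u powr (s+1) + X) / (u powr s + Y))"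
    using t0 by simp
  also have "\<dots> = lam s u 1" using lam_u1[of u s] u s unfolding X_def Y_def by (simp add: algebra_simps)
  finally have "lam s u 1 = sqrt u * E u" by simp
  also have "\<dots> < sqrt u" using u by simp
  finally show ?thesis using u unfolding G_def by (intro exI[of _ u] exI[of _ 1]) auto
qed


lemma nec_L_1: "\<exists>a b. 0 < a \<and> 0 < b \<and> L a b < lam 1 a b"
proof -
  have ev: "eventually (\<lambda>u::real. (1 - u)/(ln 1 - ln u) < (1 - u)^2/(4*(u*ln u + 1*ln 1 - (u+1)*ln((u+1)/2)))) (at_right 0)"
    by real_asymp
  obtain u :: real where u: "0 < u" "u < 1" "(1 - u)/(ln 1 - ln u) < (1 - u)^2/(4*(u*ln u + 1*ln 1 - (u+1)*ln((u+1)/2)))"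
    using witness_at_right[OF ev] by blast
  have "L u 1 < lam 1 u 1" using u unfolding lam_def L_def by (simp add: add.commute)
  then show ?thesis using u by (intro exI[of _ u] exI[of _ 1]) auto
qed

lemma nec_L_gen:
  assumes s: "s > 0" "s \<noteq> 1"
  shows "\<exists>a b. 0 < a \<and> 0 < b \<and> L a b < lam s a b"
proof -
  define h where "h = (1/2::real) powr s"
  have h2: "(1/2::real) powr (s+1) = h / 2" unfolding h_def by (simp add: powr_add)
  have hP: "h = 1 / 2 powr s" unfolding h_def by (simp add: powr_divide)
  define K where "K = (s - 1) / (s + 1) * ((1 - h) / (1 - 2 * h))"
  have hlt1: "h < 1" unfolding hP using powr_less_mono[of 0 s 2] s by simp
  have K0: "K > 0"
  proof (cases "s < 1")
    case True
    have "2 powr s < 2 powr 1" using powr_less_mono[of s 1 2] True by simp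
    then have "h > 1/2" unfolding hP by (simp add: field_simps)
    then have "(1 - h) / (1 - 2 * h) < 0" using hlt1 by (intro divide_pos_neg) auto
    moreover have "(s - 1) / (s + 1) < 0" using True s by (intro divide_neg_pos) auto
    ultimately show ?thesis unfolding K_def by (intro mult_neg_neg)
  next
    case False
    then have s1: "s > 1" using s by simp
    have "2 powr 1 < 2 powr s" using powr_less_mono[of 1 s 2] s1 by simp
    then have "h < 1/2" unfolding hP by (simp add: field_simps)
    then have "(1 - h) / (1 - 2 * h) > 0" using hlt1 by (intro divide_pos_pos) auto
    moreover have "(s - 1) / (s + 1) > 0" using s1 by (intro divide_pos_pos) auto
    ultimately show ?thesis unfolding K_def by (intro mult_pos_pos)
  qed
  have hne: "1 - 2 * h \<noteq> 0" using K0 unfolding K_def by auto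
  define Lam where "Lam = (\<lambda>u::real. (s - 1) / (s + 1) * ((u powr (s+1) + 1 - 2 * ((u+1)/2) powr (s+1)) / (u powr s + 1 - 2 * ((u+1)/2) powr s)))"
  have z: "((\<lambda>u::real. u powr c) \<longlongrightarrow> 0) (at_right 0)" if "c > 0" for c
    by (rule tendsto_zero_powrI[OF tendsto_ident_at tendsto_const]) (auto simp: that eventually_at_right_less eventually_mono[OF eventually_at_right_less])
  have "(Lam \<longlongrightarrow> (s - 1) / (s + 1) * ((0 + 1 - 2 * ((0+1)/2) powr (s+1)) / (0 + 1 - 2 * ((0+1)/2) powr s))) (at_right 0)"
    unfolding Lam_def
    by (intro tendsto_intros z) (use s hne h_def in auto)
  moreover have "(s - 1) / (s + 1) * ((0 + 1 - 2 * ((0+1)/2) powr (s+1)) / (0 + 1 - 2 * ((0+1)/2) powr s)) = K"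
  proof -
    have "2 * (1/2::real) powr (s+1) = h" using h2 by simp
    moreover have "2 * (1/2::real) powr s = 2 * h" unfolding h_def by simp
    ultimately show ?thesis unfolding K_def by simp
  qed
  ultimately have limK: "(Lam \<longlongrightarrow> K) (at_right 0)" by simp
  have limL: "((\<lambda>u::real. (1 - u)/(ln 1 - ln u)) \<longlongrightarrow> 0) (at_right 0)" by real_asymp
  have ev1: "eventually (\<lambda>u. Lam u > K/2) (at_right 0)" using order_tendstoD(1)[OF limK, of "K/2"] K0 by simp
  have ev2: "eventually (\<lambda>u. (1 - u)/(ln 1 - ln u) < K/2) (at_right 0)" using order_tendstoD(2)[OF limL, of "K/2"] K0 by simp
  obtain u where u: "0 < u" "u < 1" "Lam u > K/2" "(1 - u)/(ln 1 - ln u) < K/2"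
    using witness_at_right[OF eventually_conj[OF ev1 ev2]] by blast
  have "lam s u 1 = Lam u" unfolding Lam_def using lam_u1[of u s] u s by simp
  moreover have "L u 1 = (1 - u)/(ln 1 - ln u)" unfolding L_def using u by simp
  ultimately have "L u 1 < lam s u 1" using u(3,4) by linarith
  then show ?thesis using u by (intro exI[of _ u] exI[of _ 1]) auto
qed


lemma II_sym: "II q a b = II q b a" unfolding II_def by (rule Dl_sym)

lemma lower_G:
  assumes s: "-1/2 \<le> s" and ab: "0 < a" "0 < b"
  shows "G a b \<le> lam s a b"
proof (cases "a = b")
  case True
  then show ?thesis unfolding G_def lam_def using ab by simp
next
  case False
  have p1: "II (-5/2) a b > 0" "II (s-2) a b > 0" using II_pos ab False by auto
  have m: "II (-5/2+1) a b * II (s-2) a b \<le> II ((s-2)+1) a b * II (-5/2) a b"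
    by (rule II_mono[OF ab False]) (use s in simp)
  have e: "(-5/2+1::real) = -3/2" "s - 2 + 1 = s - 1" by simp_all
  have "II (-3/2) a b / II (-5/2) a b \<le> II (s-1) a b / II (s-2) a b"
    using m p1 unfolding e by (simp add: field_simps)
  then show ?thesis using G_base[OF ab False] lam_II[OF ab False] by simp
qed

lemma L_base:
  assumes ab: "0 < a" "0 < b" "a \<noteq> b"
  shows "II (-1) a b / II (-2) a b \<le> L a b"
proof (cases "a < b")
  case True
  then show ?thesis using L_base_aux ab by blast
next
  case False
  then have "b < a" using ab by simp
  then have "II (-1) b a / II (-2) b a \<le> L b a" using L_base_aux ab by blast
  moreover have "L b a = L a b" unfolding L_def using ab by (simp add: divide_simps) (simp add: algebra_simps)
  ultimately show ?thesis using II_sym by metis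
qed

lemma upper_L:
  assumes s: "s \<le> 0" and ab: "0 < a" "0 < b"
  shows "lam s a b \<le> L a b"
proof (cases "a = b")
  case True
  then show ?thesis unfolding L_def lam_def using ab by simp
next
  case False
  have p1: "II (-2) a b > 0" "II (s-2) a b > 0" using II_pos ab False by auto
  have m: "II ((s-2)+1) a b * II (-2) a b \<le> II (-2+1) a b * II (s-2) a b"
    by (rule II_mono[OF ab False]) (use s in simp)
  have e: "(-2+1::real) = -1" "s - 2 + 1 = s - 1" by simp_all
  have "II (s-1) a b / II (s-2) a b \<le> II (-1) a b / II (-2) a b"
    using m p1 unfolding e by (simp add: field_simps)
  then show ?thesis using L_base[OF ab False] lam_II[OF ab False] by simp
qed

theorem theorem3:
  shows "(\<forall>s a b. -1/2 \<le> s \<and> s \<le> 0 \<and> 0 < a \<and> 0 < b \<longrightarrow>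
            G a b \<le> lam s a b \<and> lam s a b \<le> L a b)
       \<and> (\<forall>s. (\<forall>a b. 0 < a \<and> 0 < b \<longrightarrow> G a b \<le> lam s a b) \<longleftrightarrow> s \<ge> -1/2)
       \<and> (\<forall>s. (\<forall>a b. 0 < a \<and> 0 < b \<longrightarrow> lam s a b \<le> L a b) \<longleftrightarrow> s \<le> 0)"
proof (intro conjI allI impI iffI)
  fix s a b :: real
  assume h: "-1/2 \<le> s \<and> s \<le> 0 \<and> 0 < a \<and> 0 < b"
  then show "G a b \<le> lam s a b" using lower_G by blast
  show "lam s a b \<le> L a b" using h upper_L by blast
next
  fix s :: real
  assume h: "\<forall>a b. 0 < a \<and> 0 < b \<longrightarrow> G a b \<le> lam s a b"
  show "-1/2 \<le> s"
  proof (rule ccontr)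
    assume "\<not> -1/2 \<le> s"
    then have s: "s < -1/2" by simp
    then obtain a b where "0 < a" "0 < b" "lam s a b < G a b"
      using nec_G_m1 nec_G_gen[OF s] by (cases "s = -1") auto
    then show False using h by force
  qed
next
  fix s a b :: real
  assume "-1/2 \<le> s" "0 < a \<and> 0 < b"
  then show "G a b \<le> lam s a b" using lower_G by blast
next
  fix s :: real
  assume h: "\<forall>a b. 0 < a \<and> 0 < b \<longrightarrow> lam s a b \<le> L a b"
  show "s \<le> 0"
  proof (rule ccontr)
    assume "\<not> s \<le> 0"
    then have s: "s > 0" by simp
    then obtain a b where "0 < a" "0 < b" "L a b < lam s a b"
      using nec_L_1 nec_L_gen[OF s] by (cases "s = 1") auto
    then show False using h by force
  qed
next
  fix s a b :: real
  assume "s \<le> 0" "0 < a \<and> 0 < b"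
  then show "lam s a b \<le> L a b" using upper_L by blast
qed

end
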